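(* Fix $\ell\in\mathbb{Z}$ and $\beta>0$. As $k_0\to\infty$, the probability of the following event goes to $1$: for all $a\in[\ell-1,\ell]$ and all integers $N\ge k_0$, $$\frac12 s_a(t)\le Z_a^{(\frac N\beta,0)}(t)\le\frac32 s_a(t),\qquad\forall t\ge\frac{N+1}\beta.$$
   Context: $B$ is a standard Brownian motion and $s_a(t):=\sqrt{a+\beta t/4}$. For $(t_0,x_0)$, the forward diffusion $Z_a^{(t_0,x_0)}$ is the solution on $[t_0,\infty)$ of $dZ(t)=(a+\frac\beta4t-Z(t)^2)dt+dB(t)$, $Z(t_0)=x_0$, restarted from $+\infty$ whenever it hits $-\infty$. *)

theory Defs
  imports "HOL-Probability.Probability"
begin

definition brownian_motion :: "'a measure \<Rightarrow> (real \<Rightarrow> 'a \<Rightarrow> real) \<Rightarrow> bool" where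
  "brownian_motion M B \<longleftrightarrow>
     prob_space M \<and>
     (\<forall>t\<ge>0. B t \<in> borel_measurable M) \<and>
     (\<forall>\<omega>\<in>space M. B 0 \<omega> = 0 \<and> continuous_on {0..} (\<lambda>t. B t \<omega>)) \<and>
     (\<forall>s t. 0 \<le> s \<and> s < t \<longrightarrow>
        distributed M lborel (\<lambda>\<omega>. B t \<omega> - B s \<omega>)
          (\<lambda>x. ennreal (normal_density 0 (sqrt (t - s)) x))) \<and>
     (\<forall>ts :: real list. sorted_wrt (<) ts \<and> (\<forall>x\<in>set ts. 0 \<le> x) \<longrightarrow>
        prob_space.indep_vars M (\<lambda>_. borel)
          (\<lambda>i \<omega>. B (ts ! Suc i) \<omega> - B (ts ! i) \<omega>) {..<length ts - 1})"

definition s_fun :: "real \<Rightarrow> real \<Rightarrow> real \<Rightarrow> real" where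
  "s_fun \<beta> a t = sqrt (a + \<beta> * t / 4)"

(* Pathwise meaning of: Z solves dZ = (a + beta t/4 - Z^2) dt + db on [t0,oo), Z t0 = x0,
   restarted from +oo whenever it hits -oo.  S is the (locally finite) set of explosion
   times; between them Z is continuous and satisfies the integral equation; at each
   explosion time Z tends to -oo from the left and to +oo from the right. *)
definition diffusion_path ::
  "(real \<Rightarrow> real) \<Rightarrow> real \<Rightarrow> real \<Rightarrow> real \<Rightarrow> real \<Rightarrow> (real \<Rightarrow> real) \<Rightarrow> bool" where
  "diffusion_path b \<beta> a t0 x0 Z \<longleftrightarrow>
     (\<exists>S :: real set.
        S \<subseteq> {t0<..} \<and>
        (\<forall>T. finite (S \<inter> {t0..T})) \<and>
        Z t0 = x0 \<and>
        continuous_on ({t0..} - S) Z \<and>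
        (\<forall>s t. t0 \<le> s \<and> s \<le> t \<and> S \<inter> {s..t} = {} \<longrightarrow>
           Z t - Z s = integral {s..t} (\<lambda>u. a + \<beta> * u / 4 - (Z u)\<^sup>2) + (b t - b s)) \<and>
        (\<forall>\<tau>\<in>S. filterlim Z at_bot (at_left \<tau>) \<and> filterlim Z at_top (at_right \<tau>)))"

end

theory Submission
  imports Defs
begin

lemma barrier_induct:
  fixes F :: "real \<Rightarrow> real"
  assumes rc: "\<And>t. t0 \<le> t \<Longrightarrow> t < T \<Longrightarrow> (F \<longlongrightarrow> F t) (at_right t)"
    and step: "\<And>t1. t0 \<le> t1 \<Longrightarrow> t1 < T \<Longrightarrow> (\<forall>u. t0 \<le> u \<and> u < t1 \<longrightarrow> 0 \<le> F u) \<Longrightarrow> 0 < F t1"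
    and t: "t0 \<le> t" "t < T"
  shows "0 \<le> F t"
proof (rule ccontr)
  assume "\<not> 0 \<le> F t"
  define E where "E = {x. t0 \<le> x \<and> x < T \<and> F x < 0}"
  have tE: "t \<in> E" using t \<open>\<not> 0 \<le> F t\<close> by (auto simp: E_def)
  have bdd: "bdd_below E" by (auto simp: E_def bdd_below_def)
  define t1 where "t1 = Inf E"
  have t1le: "t1 \<le> t" using tE bdd by (simp add: t1_def cInf_lower)
  have t0le: "t0 \<le> t1" unfolding t1_def using tE by (intro cInf_greatest) (auto simp: E_def)
  have below: "\<forall>u. t0 \<le> u \<and> u < t1 \<longrightarrow> 0 \<le> F u"
  proof (intro allI impI)
    fix u assume u: "t0 \<le> u \<and> u < t1"
    show "0 \<le> F u"
    proof (rule ccontr)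
      assume "\<not> 0 \<le> F u"
      then have "u \<in> E" using u t1le t by (auto simp: E_def)
      then have "t1 \<le> u" using bdd by (simp add: t1_def cInf_lower)
      with u show False by simp
    qed
  qed
  have pos: "0 < F t1" using step[OF t0le _ below] t1le t by simp
  have "\<forall>\<^sub>F x in at_right t1. 0 < F x"
    using order_tendstoD(1)[OF rc[OF t0le] pos] t1le t by simp
  then obtain b where b: "b > t1" "\<And>y. y > t1 \<Longrightarrow> y < b \<Longrightarrow> 0 < F y"
    by (auto simp: eventually_at_right_field)
  have "\<exists>e\<in>E. e < b" using tE b(1) unfolding t1_def by (subst cInf_less_iff[symmetric]) (auto simp: bdd)
  then obtain e where e: "e \<in> E" "e < b" by blast
  have "t1 \<le> e" using e bdd by (simp add: t1_def cInf_lower)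
  moreover have "e \<noteq> t1" using e pos by (auto simp: E_def)
  ultimately have "0 < F e" using b e by simp
  with e show False by (simp add: E_def)
qed

locale detctx =
  fixes \<beta> a t0 T :: real and b Z c :: "real \<Rightarrow> real"
  assumes bpos: "\<beta> > 0"
    and cdef: "\<And>u. c u = sqrt (a + \<beta> * u / 4)"
    and cbig: "\<And>u. t0 \<le> u \<Longrightarrow> 4 \<le> c u \<and> 3 * \<beta> \<le> c u"
    and osc: "\<And>u v. t0 \<le> u \<Longrightarrow> u \<le> v \<Longrightarrow> v \<le> u + 1 / \<beta> \<Longrightarrow> \<bar>b v - b u\<bar> \<le> c u / 8"
    and Z0: "Z t0 = 0"
    and t0T: "t0 < T"
    and cont: "continuous_on {t0..<T} Z"
    and eq: "\<And>s t. t0 \<le> s \<Longrightarrow> s \<le> t \<Longrightarrow> t < T \<Longrightarrow>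
              Z t - Z s = integral {s..t} (\<lambda>u. a + \<beta> * u / 4 - (Z u)\<^sup>2) + (b t - b s)"
begin

lemma c_sq: "t0 \<le> u \<Longrightarrow> (c u)\<^sup>2 = a + \<beta> * u / 4"
proof -
  assume u: "t0 \<le> u"
  have "4 \<le> sqrt (a + \<beta> * u / 4)" using cbig[OF u] cdef by simp
  then have "0 \<le> a + \<beta> * u / 4" by (smt (verit) real_sqrt_lt_0_iff)
  then show ?thesis by (simp add: cdef)
qed

lemma c_mono: "u \<le> v \<Longrightarrow> c u \<le> c v"
  using bpos by (simp add: cdef)

lemma c_cont: "continuous_on A c"
  unfolding cdef[abs_def] by (intro continuous_intros) auto

lemma c_step: "t0 \<le> u \<Longrightarrow> u \<le> v \<Longrightarrow> v \<le> u + 1 / \<beta> \<Longrightarrow> c v \<le> c u + 1 / 2"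
proof -
  assume u: "t0 \<le> u" and uv: "u \<le> v" and v: "v \<le> u + 1 / \<beta>"
  have cu: "0 \<le> c u" using cbig[OF u] by simp
  have tv: "t0 \<le> v" using u uv by linarith
  have e1: "(c v)\<^sup>2 = a + \<beta> * v / 4" using c_sq[OF tv] .
  have e2: "(c u)\<^sup>2 = a + \<beta> * u / 4" using c_sq[OF u] .
  have "\<beta> * v \<le> \<beta> * (u + 1 / \<beta>)" using v bpos by (intro mult_left_mono) auto
  also have "\<beta> * (u + 1 / \<beta>) = \<beta> * u + 1" using bpos by (simp add: distrib_left)
  finally have bv: "\<beta> * v \<le> \<beta> * u + 1" .
  have "(c u + 1 / 2)\<^sup>2 = (c u)\<^sup>2 + c u + 1 / 4" by (simp add: power2_eq_square algebra_simps)
  then have "(c v)\<^sup>2 \<le> (c u + 1 / 2)\<^sup>2" using e1 e2 bv cu by linarith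
  then show ?thesis using cu using power2_le_imp_le[of "c v" "c u + 1 / 2"] by simp
qed

lemma Z_cont_Icc: "t0 \<le> p \<Longrightarrow> q < T \<Longrightarrow> continuous_on {p..q} Z"
  by (rule continuous_on_subset[OF cont]) auto

lemma int_ge:
  assumes "t0 \<le> p" "p \<le> q" "q < T" "\<And>u. p \<le> u \<Longrightarrow> u \<le> q \<Longrightarrow> m \<le> a + \<beta> * u / 4 - (Z u)\<^sup>2"
  shows "m * (q - p) \<le> integral {p..q} (\<lambda>u. a + \<beta> * u / 4 - (Z u)\<^sup>2)"
proof -
  have ci: "continuous_on {p..q} (\<lambda>u. a + \<beta> * u / 4 - (Z u)\<^sup>2)"
    using Z_cont_Icc[OF assms(1,3)] by (intro continuous_intros) auto
  have "integral {p..q} (\<lambda>u. m) \<le> integral {p..q} (\<lambda>u. a + \<beta> * u / 4 - (Z u)\<^sup>2)"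
    by (rule integral_le) (use assms integrable_continuous_interval[OF ci] in auto)
  then show ?thesis using assms(2) by (simp add: integral_const_real mult.commute)
qed

lemma int_le:
  assumes "t0 \<le> p" "p \<le> q" "q < T" "\<And>u. p \<le> u \<Longrightarrow> u \<le> q \<Longrightarrow> a + \<beta> * u / 4 - (Z u)\<^sup>2 \<le> m"
  shows "integral {p..q} (\<lambda>u. a + \<beta> * u / 4 - (Z u)\<^sup>2) \<le> m * (q - p)"
proof -
  have ci: "continuous_on {p..q} (\<lambda>u. a + \<beta> * u / 4 - (Z u)\<^sup>2)"
    using Z_cont_Icc[OF assms(1,3)] by (intro continuous_intros) auto
  have "integral {p..q} (\<lambda>u. a + \<beta> * u / 4 - (Z u)\<^sup>2) \<le> integral {p..q} (\<lambda>u. m)"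
    by (rule integral_le) (use assms integrable_continuous_interval[OF ci] in auto)
  then show ?thesis using assms(2) by (simp add: integral_const_real mult.commute)
qed

end

lemma left_closure:
  fixes f g :: "real \<Rightarrow> real"
  assumes "continuous_on {x..y} f" "continuous_on {x..y} g" "x < y"
    and "\<And>u. x \<le> u \<Longrightarrow> u < y \<Longrightarrow> g u \<le> f u"
  shows "g y \<le> f y"
proof -
  have "\<forall>\<^sub>F u in at_left y. g u \<le> f u"
    unfolding eventually_at_left_field using assms(3,4) by (intro exI[of _ x]) auto
  then show ?thesis
    by (intro tendsto_le[OF _ continuous_on_Icc_at_leftD[OF assms(1,3)] continuous_on_Icc_at_leftD[OF assms(2,3)]]) simp_all
qed

lemma right_closure:
  fixes f g :: "real \<Rightarrow> real"
  assumes "continuous_on {x..y} f" "continuous_on {x..y} g" "x < y"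
    and "\<And>u. x < u \<Longrightarrow> u \<le> y \<Longrightarrow> g u \<le> f u"
  shows "g x \<le> f x"
proof -
  have "\<forall>\<^sub>F u in at_right x. g u \<le> f u"
    unfolding eventually_at_right_field using assms(3,4) by (intro exI[of _ y]) auto
  then show ?thesis
    by (intro tendsto_le[OF _ continuous_on_Icc_at_rightD[OF assms(1,3)] continuous_on_Icc_at_rightD[OF assms(2,3)]]) simp_all
qed

context detctx begin

definition Lo :: "real \<Rightarrow> real" where
  "Lo u = (if u < t0 + 1 / \<beta> then - (c t0 / 4) else c u / 2)"

lemma c_pos: "t0 \<le> u \<Longrightarrow> 0 < c u" using cbig[of u] by simp

lemma Lo_le: "t0 \<le> u \<Longrightarrow> Lo u \<le> c u / 2"
  using c_pos[of u] c_pos[of t0] by (simp add: Lo_def)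

lemma Lo_ge: "t0 \<le> u \<Longrightarrow> - (c t0 / 4) \<le> Lo u"
  using c_pos[of u] c_pos[of t0] by (simp add: Lo_def)

lemma abs_sq_le: "\<bar>x\<bar> \<le> y \<Longrightarrow> (x::real)\<^sup>2 \<le> y\<^sup>2"
proof -
  assume h: "\<bar>x\<bar> \<le> y"
  then have "\<bar>x\<bar> \<le> \<bar>y\<bar>" by simp
  then show ?thesis by (simp add: abs_le_square_iff)
qed

end

context detctx begin
lemma low_step:
  assumes t1: "t0 \<le> t1" "t1 < T" and hyp: "\<forall>u. t0 \<le> u \<and> u < t1 \<longrightarrow> 0 \<le> Z u - Lo u"
  shows "0 < Z t1 - Lo t1"
proof -
  define K where "K = c t0 / 4"
  have Kc: "\<And>u. t0 \<le> u \<Longrightarrow> K \<le> c u / 4" unfolding K_def using c_mono by simp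
  have Zlow: "- K \<le> Z u" if "t0 \<le> u" "u \<le> t1" for u
  proof (cases "u < t1")
    case True
    have "- K \<le> Lo u" using Lo_ge[of u] that(1) K_def by simp
    then show ?thesis using hyp that True by force
  next
    case False
    then have u: "u = t1" using that by simp
    show ?thesis
    proof (cases "t0 = t1")
      case True then show ?thesis using u Z0 c_pos[of t0] by (simp add: K_def)
    next
      case False
      have "(\<lambda>_. - K) t1 \<le> Z t1"
      proof (rule left_closure[of t0 t1])
        show "continuous_on {t0..t1} Z" using Z_cont_Icc t1 by simp
        show "t0 < t1" using False t1 by simp
        fix v assume v: "t0 \<le> v" "v < t1"
        have "- K \<le> Lo v" using Lo_ge[of v] v K_def by simp
        then show "(\<lambda>_. - K) v \<le> Z v" using hyp v by force
      qed simp
      then show ?thesis using u by simp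
    qed
  qed
  define p0 where "p0 = max t0 (t1 - 1 / \<beta>)"
  have p0: "t0 \<le> p0" "p0 \<le> t1" "t1 \<le> p0 + 1 / \<beta>"
  proof -
    have "0 < 1 / \<beta>" using bpos by simp
    then show "t0 \<le> p0" "p0 \<le> t1" "t1 \<le> p0 + 1 / \<beta>" unfolding p0_def using t1 by linarith+
  qed
  show ?thesis
  proof (cases "\<exists>p. p0 \<le> p \<and> p \<le> t1 \<and> 3 / 4 * c p \<le> Z p")
    case True
    define P where "P = {p \<in> {p0..t1}. (\<lambda>p. 3 / 4 * c p) p \<le> Z p}"
    have clP: "closed P" unfolding P_def
      by (rule continuous_on_closed_Collect_le[OF continuous_on_mult_left[OF c_cont] Z_cont_Icc[of p0 t1]]) (use p0 t1 in auto)
    have neP: "P \<noteq> {}" using True by (auto simp: P_def)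
    have bdP: "bdd_above P" by (auto simp: P_def bdd_above_def)
    define p where "p = Sup P"
    have pP: "p \<in> P" unfolding p_def by (rule closed_contains_Sup[OF neP bdP clP])
    then have pp: "p0 \<le> p" "p \<le> t1" "3 / 4 * c p \<le> Z p" by (auto simp: P_def)
    have tp: "t0 \<le> p" using pp p0 by simp
    show ?thesis
    proof (cases "p = t1")
      case True
      then show ?thesis using pp Lo_le[OF t1(1)] c_pos[OF t1(1)] by simp
    next
      case False
      then have plt: "p < t1" using pp by simp
      have above: "Z u < 3 / 4 * c u" if "p < u" "u \<le> t1" for u
      proof (rule ccontr)
        assume "\<not> Z u < 3 / 4 * c u"
        then have "u \<in> P" using that pp by (auto simp: P_def)
        then have "u \<le> p" unfolding p_def by (rule cSup_upper[OF _ bdP])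
        with that show False by simp
      qed
      have "Z p \<le> 3 / 4 * c p"
      proof (rule right_closure[of p t1 "\<lambda>x. 3 / 4 * c x" Z])
        show "continuous_on {p..t1} (\<lambda>x. 3 / 4 * c x)" by (rule continuous_on_mult_left[OF c_cont])
        show "continuous_on {p..t1} Z" using Z_cont_Icc tp t1 by simp
        show "p < t1" by (rule plt)
        fix u assume "p < u" "u \<le> t1"
        then show "Z u \<le> 3 / 4 * c u" using above[of u] by simp
      qed
      then have band: "- K \<le> Z u \<and> Z u \<le> 3 / 4 * c u" if "p \<le> u" "u \<le> t1" for u
        using that above[of u] Zlow[of u] tp by (cases "u = p") auto
      have D0: "0 \<le> a + \<beta> * u / 4 - (Z u)\<^sup>2" if "p \<le> u" "u \<le> t1" for u
      proof -
        have "\<bar>Z u\<bar> \<le> c u" using band[OF that] Kc[of u] c_pos[of u] that tp by auto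
        then have "(Z u)\<^sup>2 \<le> (c u)\<^sup>2" by (rule abs_sq_le)
        then show ?thesis using c_sq[of u] that tp by simp
      qed
      have I: "0 \<le> integral {p..t1} (\<lambda>u. a + \<beta> * u / 4 - (Z u)\<^sup>2)"
        using int_ge[of p t1 0] D0 tp pp t1 by simp
      have osc1: "\<bar>b t1 - b p\<bar> \<le> c p / 8" using osc[of p t1] tp pp p0 by simp
      have ct1: "c t1 \<le> c p + 1 / 2" using c_step[of p t1] tp pp p0 by simp
      have "Z t1 = Z p + integral {p..t1} (\<lambda>u. a + \<beta> * u / 4 - (Z u)\<^sup>2) + (b t1 - b p)"
        using eq[of p t1] tp pp t1 by simp
      moreover have "- (c p / 8) \<le> b t1 - b p" using osc1 by linarith
      ultimately have "Z t1 \<ge> 5 / 8 * c p" using I pp by linarith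
      moreover have "Lo t1 \<le> c p / 2 + 1 / 4" using Lo_le[OF t1(1)] ct1 by simp
      moreover have "4 \<le> c p" using cbig[OF tp] by simp
      ultimately show ?thesis by simp
    qed
  next
    case False
    then have below: "Z u < 3 / 4 * c u" if "p0 \<le> u" "u \<le> t1" for u using that by force
    have D7: "7 / 16 * (c p0)\<^sup>2 \<le> a + \<beta> * u / 4 - (Z u)\<^sup>2" if "p0 \<le> u" "u \<le> t1" for u
    proof -
      have tu: "t0 \<le> u" using that p0 by simp
      have "\<bar>Z u\<bar> \<le> 3 / 4 * c u" using below[OF that] Zlow[of u] Kc[OF tu] c_pos[OF tu] that tu by auto
      then have "(Z u)\<^sup>2 \<le> (3 / 4 * c u)\<^sup>2" by (rule abs_sq_le)
      then have "(Z u)\<^sup>2 \<le> 9 / 16 * (c u)\<^sup>2" by (simp add: power2_eq_square)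
      moreover have "(c p0)\<^sup>2 \<le> (c u)\<^sup>2" using c_mono[of p0 u] c_pos[of p0] p0 that by (simp add: power_mono)
      ultimately show ?thesis using c_sq[OF tu] by simp
    qed
    have I: "7 / 16 * (c p0)\<^sup>2 * (t1 - p0) \<le> integral {p0..t1} (\<lambda>u. a + \<beta> * u / 4 - (Z u)\<^sup>2)"
      by (rule int_ge[OF p0(1) p0(2) t1(2) D7])
    have osc1: "\<bar>b t1 - b p0\<bar> \<le> c p0 / 8" using osc[of p0 t1] p0 by simp
    have Zeq: "Z t1 = Z p0 + integral {p0..t1} (\<lambda>u. a + \<beta> * u / 4 - (Z u)\<^sup>2) + (b t1 - b p0)"
      using eq[of p0 t1] p0 t1 by simp
    have osc1l: "- (c p0 / 8) \<le> b t1 - b p0" using osc1 by linarith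
    show ?thesis
    proof (cases "t1 < t0 + 1 / \<beta>")
      case True
      then have pt: "p0 = t0" by (simp add: p0_def)
      have "0 \<le> 7 / 16 * (c p0)\<^sup>2 * (t1 - p0)" using p0 by simp
      moreover have "Z p0 = 0" using pt Z0 by simp
      ultimately have "Z t1 \<ge> - (c p0 / 8)" using Zeq I osc1l by linarith
      then have "Z t1 \<ge> - (c t0 / 8)" using pt by simp
      moreover have "Lo t1 = - (c t0 / 4)" using True by (simp add: Lo_def)
      ultimately show ?thesis using c_pos[of t0] by simp
    next
      case False
      then have pe: "p0 = t1 - 1 / \<beta>" by (simp add: p0_def)
      have cp: "4 \<le> c p0" "3 * \<beta> \<le> c p0" using cbig[OF p0(1)] by auto
      have tp1: "t1 - p0 = 1 / \<beta>" using pe by simp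
      have "7 / 16 * (c p0)\<^sup>2 * (t1 - p0) = 7 / 16 * (c p0 * (c p0 / \<beta>))"
        unfolding tp1 by (simp add: power2_eq_square)
      also have "\<dots> \<ge> 7 / 16 * (c p0 * 3)"
        using cp bpos by (intro mult_left_mono) (auto simp: field_simps)
      finally have I2: "21 / 16 * c p0 \<le> integral {p0..t1} (\<lambda>u. a + \<beta> * u / 4 - (Z u)\<^sup>2)"
        using I by linarith
      have "Z p0 \<ge> - (c p0 / 4)" using Zlow[of p0] Kc[of p0] p0 by simp
      then have "Z t1 \<ge> 15 / 16 * c p0" using Zeq I2 osc1l by linarith
      moreover have "Lo t1 \<le> c p0 / 2 + 1 / 4"
        using Lo_le[OF t1(1)] c_step[of p0 t1] p0 by simp
      ultimately show ?thesis using cp by simp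
    qed
  qed
qed

end

context detctx begin

lemma up_step:
  assumes t1: "t0 \<le> t1" "t1 < T" and hyp: "\<forall>u. t0 \<le> u \<and> u < t1 \<longrightarrow> 0 \<le> 3 / 2 * c u - Z u"
  shows "0 < 3 / 2 * c t1 - Z t1"
proof -
  define p0 where "p0 = max t0 (t1 - 1 / \<beta>)"
  have p0: "t0 \<le> p0" "p0 \<le> t1" "t1 \<le> p0 + 1 / \<beta>"
  proof -
    have "0 < 1 / \<beta>" using bpos by simp
    then show "t0 \<le> p0" "p0 \<le> t1" "t1 \<le> p0 + 1 / \<beta>" unfolding p0_def using t1 by linarith+
  qed
  show ?thesis
  proof (cases "\<exists>p. p0 \<le> p \<and> p \<le> t1 \<and> Z p \<le> 5 / 4 * c p")
    case True
    define P where "P = {p \<in> {p0..t1}. Z p \<le> 5 / 4 * c p}"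
    have clP: "closed P" unfolding P_def
      by (rule continuous_on_closed_Collect_le[OF Z_cont_Icc[of p0 t1] continuous_on_mult_left[OF c_cont]]) (use p0 t1 in auto)
    have neP: "P \<noteq> {}" using True by (auto simp: P_def)
    have bdP: "bdd_above P" by (auto simp: P_def bdd_above_def)
    define p where "p = Sup P"
    have pP: "p \<in> P" unfolding p_def by (rule closed_contains_Sup[OF neP bdP clP])
    then have pp: "p0 \<le> p" "p \<le> t1" "Z p \<le> 5 / 4 * c p" by (auto simp: P_def)
    have tp: "t0 \<le> p" using pp p0 by simp
    show ?thesis
    proof (cases "p = t1")
      case True
      then show ?thesis using pp c_pos[OF t1(1)] by simp
    next
      case False
      then have plt: "p < t1" using pp by simp
      have above: "5 / 4 * c u < Z u" if "p < u" "u \<le> t1" for u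
      proof (rule ccontr)
        assume "\<not> 5 / 4 * c u < Z u"
        then have "u \<in> P" using that pp by (auto simp: P_def)
        then have "u \<le> p" unfolding p_def by (rule cSup_upper[OF _ bdP])
        with that show False by simp
      qed
      have "5 / 4 * c p \<le> Z p"
      proof (rule right_closure[of p t1 Z "\<lambda>x. 5 / 4 * c x"])
        show "continuous_on {p..t1} (\<lambda>x. 5 / 4 * c x)" by (rule continuous_on_mult_left[OF c_cont])
        show "continuous_on {p..t1} Z" using Z_cont_Icc tp t1 by simp
        show "p < t1" by (rule plt)
        fix u assume "p < u" "u \<le> t1"
        then show "5 / 4 * c u \<le> Z u" using above[of u] by simp
      qed
      then have band: "5 / 4 * c u \<le> Z u" if "p \<le> u" "u \<le> t1" for u
        using that above[of u] by (cases "u = p") auto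
      have D0: "a + \<beta> * u / 4 - (Z u)\<^sup>2 \<le> 0" if "p \<le> u" "u \<le> t1" for u
      proof -
        have tu: "t0 \<le> u" using that tp by simp
        have "c u \<le> Z u" using band[OF that] c_pos[OF tu] by simp
        then have "(c u)\<^sup>2 \<le> (Z u)\<^sup>2" using c_pos[OF tu] by (simp add: power_mono)
        then show ?thesis using c_sq[OF tu] by simp
      qed
      have I: "integral {p..t1} (\<lambda>u. a + \<beta> * u / 4 - (Z u)\<^sup>2) \<le> 0"
        using int_le[OF tp pp(2) t1(2) D0] by simp
      have osc1: "\<bar>b t1 - b p\<bar> \<le> c p / 8" using osc[of p t1] tp pp p0 by simp
      have osc1u: "b t1 - b p \<le> c p / 8" using osc1 by linarith
      have "Z t1 = Z p + integral {p..t1} (\<lambda>u. a + \<beta> * u / 4 - (Z u)\<^sup>2) + (b t1 - b p)"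
        using eq[of p t1] tp pp t1 by simp
      then have "Z t1 \<le> 11 / 8 * c p" using I osc1u pp by linarith
      moreover have "c p \<le> c t1" using c_mono pp by simp
      moreover have "0 < c p" using c_pos[OF tp] .
      ultimately show ?thesis by simp
    qed
  next
    case False
    then have above: "5 / 4 * c u < Z u" if "p0 \<le> u" "u \<le> t1" for u using that by force
    have pne: "p0 \<noteq> t0"
    proof
      assume "p0 = t0"
      then have "5 / 4 * c t0 < Z t0" using above[of t0] p0 by simp
      then show False using Z0 c_pos[of t0] by simp
    qed
    then have pe: "p0 = t1 - 1 / \<beta>" by (simp add: p0_def max_def split: if_splits)
    have plt: "p0 < t1" using pe bpos by simp
    have D9: "a + \<beta> * u / 4 - (Z u)\<^sup>2 \<le> - (9 / 16 * (c p0)\<^sup>2)" if "p0 \<le> u" "u \<le> t1" for u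
    proof -
      have tu: "t0 \<le> u" using that p0 by simp
      have "5 / 4 * c u \<le> Z u" using above[OF that] by simp
      then have "(5 / 4 * c u)\<^sup>2 \<le> (Z u)\<^sup>2" using c_pos[OF tu] by (intro power_mono) auto
      then have "25 / 16 * (c u)\<^sup>2 \<le> (Z u)\<^sup>2" by (simp add: power2_eq_square)
      moreover have "(c p0)\<^sup>2 \<le> (c u)\<^sup>2" using c_mono[of p0 u] c_pos[of p0] p0 that by (simp add: power_mono)
      ultimately show ?thesis using c_sq[OF tu] by simp
    qed
    have I: "integral {p0..t1} (\<lambda>u. a + \<beta> * u / 4 - (Z u)\<^sup>2) \<le> - (9 / 16 * (c p0)\<^sup>2) * (t1 - p0)"
      by (rule int_le[OF p0(1) p0(2) t1(2) D9])
    have cp: "4 \<le> c p0" "3 * \<beta> \<le> c p0" using cbig[OF p0(1)] by auto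
    have tp1: "t1 - p0 = 1 / \<beta>" using pe by simp
    have "- (9 / 16 * (c p0)\<^sup>2) * (t1 - p0) = - (9 / 16 * (c p0 * (c p0 / \<beta>)))"
      unfolding tp1 by (simp add: power2_eq_square)
    also have "\<dots> \<le> - (9 / 16 * (c p0 * 3))"
      using cp bpos by (simp add: field_simps mult_left_mono)
    finally have I2: "integral {p0..t1} (\<lambda>u. a + \<beta> * u / 4 - (Z u)\<^sup>2) \<le> - (27 / 16 * c p0)"
      using I by linarith
    have osc1: "\<bar>b t1 - b p0\<bar> \<le> c p0 / 8" using osc[of p0 t1] p0 by simp
    have osc1u: "b t1 - b p0 \<le> c p0 / 8" using osc1 by linarith
    have Zeq: "Z t1 = Z p0 + integral {p0..t1} (\<lambda>u. a + \<beta> * u / 4 - (Z u)\<^sup>2) + (b t1 - b p0)"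
      using eq[of p0 t1] p0 t1 by simp
    have "Z p0 \<le> 3 / 2 * c p0" using hyp p0 plt by auto
    then have "Z t1 \<le> 3 / 2 * c p0 - 27 / 16 * c p0 + c p0 / 8" using Zeq I2 osc1u by linarith
    moreover have "c p0 \<le> c t1" using c_mono p0 by simp
    ultimately show ?thesis using cp by simp
  qed
qed

end

context detctx begin

lemma Z_rc: "t0 \<le> t \<Longrightarrow> t < T \<Longrightarrow> (Z \<longlongrightarrow> Z t) (at_right t)"
proof -
  assume t: "t0 \<le> t" "t < T"
  have "continuous_on {t..(t + T) / 2} Z" using Z_cont_Icc[of t "(t + T) / 2"] t by simp
  then show ?thesis by (rule continuous_on_Icc_at_rightD) (use t in simp)
qed

lemma c_rc: "(c \<longlongrightarrow> c t) (at_right t)"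
proof -
  have "continuous_on {t..t+1} c" by (rule c_cont)
  then show ?thesis by (rule continuous_on_Icc_at_rightD) simp
qed

lemma Lo_rc: "(Lo \<longlongrightarrow> Lo t) (at_right t)"
proof (cases "t < t0 + 1 / \<beta>")
  case True
  have "\<forall>\<^sub>F x in at_right t. (\<lambda>_. - (c t0 / 4)) x = Lo x"
    unfolding eventually_at_right_field using True by (intro exI[of _ "t0 + 1 / \<beta>"]) (auto simp: Lo_def)
  moreover have "Lo t = - (c t0 / 4)" using True by (simp add: Lo_def)
  ultimately show ?thesis by (simp add: tendsto_cong[symmetric])
next
  case False
  have "\<forall>\<^sub>F x in at_right t. (\<lambda>x. c x / 2) x = Lo x"
    unfolding eventually_at_right_field using False by (intro exI[of _ "t + 1"]) (auto simp: Lo_def)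
  moreover have "Lo t = c t / 2" using False by (simp add: Lo_def)
  moreover have "((\<lambda>x. c x / 2) \<longlongrightarrow> c t / 2) (at_right t)" by (intro tendsto_intros c_rc) auto
  ultimately show ?thesis using tendsto_cong by metis
qed

lemma band:
  assumes "t0 \<le> t" "t < T"
  shows "Lo t \<le> Z t \<and> Z t \<le> 3 / 2 * c t"
proof
  have "0 \<le> (\<lambda>x. Z x - Lo x) t"
  proof (rule barrier_induct[of t0 T "\<lambda>x. Z x - Lo x"])
    fix s assume "t0 \<le> s" "s < T"
    then show "((\<lambda>x. Z x - Lo x) \<longlongrightarrow> Z s - Lo s) (at_right s)"
      by (intro tendsto_intros Z_rc Lo_rc)
  next
    fix t1 assume "t0 \<le> t1" "t1 < T" "\<forall>u. t0 \<le> u \<and> u < t1 \<longrightarrow> 0 \<le> Z u - Lo u"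
    then show "0 < Z t1 - Lo t1" by (rule low_step)
  qed (use assms in auto)
  then show "Lo t \<le> Z t" by simp
next
  have "0 \<le> (\<lambda>x. 3 / 2 * c x - Z x) t"
  proof (rule barrier_induct[of t0 T "\<lambda>x. 3 / 2 * c x - Z x"])
    fix s assume "t0 \<le> s" "s < T"
    then show "((\<lambda>x. 3 / 2 * c x - Z x) \<longlongrightarrow> 3 / 2 * c s - Z s) (at_right s)"
      by (intro tendsto_intros Z_rc c_rc)
  next
    fix t1 assume "t0 \<le> t1" "t1 < T" "\<forall>u. t0 \<le> u \<and> u < t1 \<longrightarrow> 0 \<le> 3 / 2 * c u - Z u"
    then show "0 < 3 / 2 * c t1 - Z t1" by (rule up_step)
  qed (use assms in auto)
  then show "Z t \<le> 3 / 2 * c t" by simp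
qed

end

lemma det_main:
  fixes b Z :: "real \<Rightarrow> real"
  assumes bpos: "\<beta> > 0"
    and cbig: "\<And>u. t0 \<le> u \<Longrightarrow> 4 \<le> s_fun \<beta> a u \<and> 3 * \<beta> \<le> s_fun \<beta> a u"
    and osc: "\<And>u v. t0 \<le> u \<Longrightarrow> u \<le> v \<Longrightarrow> v \<le> u + 1 / \<beta> \<Longrightarrow> \<bar>b v - b u\<bar> \<le> s_fun \<beta> a u / 8"
    and dp: "diffusion_path b \<beta> a t0 0 Z"
    and t: "t0 + 1 / \<beta> \<le> t"
  shows "s_fun \<beta> a t / 2 \<le> Z t \<and> Z t \<le> 3 / 2 * s_fun \<beta> a t"
proof -
  obtain S where S: "S \<subseteq> {t0<..}" "\<And>T. finite (S \<inter> {t0..T})" "Z t0 = 0"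
    "continuous_on ({t0..} - S) Z"
    "\<And>s t. t0 \<le> s \<Longrightarrow> s \<le> t \<Longrightarrow> S \<inter> {s..t} = {} \<Longrightarrow>
           Z t - Z s = integral {s..t} (\<lambda>u. a + \<beta> * u / 4 - (Z u)\<^sup>2) + (b t - b s)"
    "\<And>\<tau>. \<tau> \<in> S \<Longrightarrow> filterlim Z at_bot (at_left \<tau>)"
    using dp unfolding diffusion_path_def by blast
  have ctx: "detctx \<beta> a t0 T b Z (s_fun \<beta> a)" if T: "t0 < T" "S \<inter> {t0..<T} = {}" for T
  proof
    show "\<beta> > 0" by (rule bpos)
    show "\<And>u. s_fun \<beta> a u = sqrt (a + \<beta> * u / 4)" by (simp add: s_fun_def)
    show "\<And>u. t0 \<le> u \<Longrightarrow> 4 \<le> s_fun \<beta> a u \<and> 3 * \<beta> \<le> s_fun \<beta> a u" by (rule cbig)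
    show "\<And>u v. t0 \<le> u \<Longrightarrow> u \<le> v \<Longrightarrow> v \<le> u + 1 / \<beta> \<Longrightarrow> \<bar>b v - b u\<bar> \<le> s_fun \<beta> a u / 8" by (rule osc)
    show "Z t0 = 0" by (rule S(3))
    show "t0 < T" by (rule T(1))
    show "continuous_on {t0..<T} Z" by (rule continuous_on_subset[OF S(4)]) (use T in auto)
    fix s t assume st: "t0 \<le> s" "s \<le> t" "t < T"
    have "S \<inter> {s..t} = {}" using T st by auto
    then show "Z t - Z s = integral {s..t} (\<lambda>u. a + \<beta> * u / 4 - (Z u)\<^sup>2) + (b t - b s)"
      using S(5) st by simp
  qed
  have Se: "S = {}"
  proof (rule ccontr)
    assume "S \<noteq> {}"
    then obtain \<tau> where \<tau>: "\<tau> \<in> S" by blast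
    define F where "F = S \<inter> {t0..\<tau>}"
    have fF: "finite F" unfolding F_def by (rule S(2))
    have \<tau>F: "\<tau> \<in> F" using \<tau> S(1) by (auto simp: F_def)
    define T where "T = Min F"
    have TF: "T \<in> F" unfolding T_def using fF \<tau>F by (intro Min_in) auto
    have TS: "T \<in> S" and tT: "t0 < T" using TF S(1) by (auto simp: F_def)
    have empty: "S \<inter> {t0..<T} = {}"
    proof (rule ccontr)
      assume "S \<inter> {t0..<T} \<noteq> {}"
      then obtain s where s: "s \<in> S" "t0 \<le> s" "s < T" by auto
      have "T \<le> \<tau>" using TF by (simp add: F_def)
      then have "s \<in> F" using s by (simp add: F_def)
      then have "T \<le> s" unfolding T_def using fF by simp
      with s show False by simp
    qed
    interpret d: detctx \<beta> a t0 T b Z "s_fun \<beta> a" by (rule ctx[OF tT empty])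
    have low: "- (s_fun \<beta> a t0 / 4) \<le> Z u" if "t0 \<le> u" "u < T" for u
      using d.band[OF that] d.Lo_ge[OF that(1)] by simp
    have "\<forall>\<^sub>F x in at_left T. Z x \<le> - (s_fun \<beta> a t0 / 4) - 1"
      using S(6)[OF TS] by (simp add: filterlim_at_bot)
    moreover have "\<forall>\<^sub>F x in at_left T. t0 < x \<and> x < T"
      unfolding eventually_at_left_field using tT by (intro exI[of _ t0]) auto
    ultimately have "\<forall>\<^sub>F x in at_left T. False"
    proof eventually_elim
      case (elim x)
      then have "- (s_fun \<beta> a t0 / 4) \<le> Z x" using low[of x] by simp
      with elim show False by simp
    qed
    then show False by (simp add: eventually_False)
  qed
  have tt: "t0 \<le> t" using t bpos by (smt (verit) divide_pos_pos zero_less_one)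
  interpret d: detctx \<beta> a t0 "t + 1" b Z "s_fun \<beta> a" by (rule ctx) (use tt Se in auto)
  have "d.Lo t \<le> Z t \<and> Z t \<le> 3 / 2 * s_fun \<beta> a t" by (rule d.band) (use tt in auto)
  moreover have "d.Lo t = s_fun \<beta> a t / 2" using t by (simp add: d.Lo_def)
  ultimately show ?thesis by simp
qed

lemma det_final:
  fixes b Z :: "real \<Rightarrow> real" and N :: real
  assumes bpos: "\<beta> > 0" and al: "real_of_int l - 1 \<le> a"
    and Nbig: "200 + 8 * \<bar>real_of_int l\<bar> + 72 * \<beta>\<^sup>2 \<le> N"
    and pc: "\<And>u v. N / \<beta> \<le> u \<Longrightarrow> u \<le> v \<Longrightarrow> v \<le> u + 1 / \<beta> \<Longrightarrow> (b v - b u)\<^sup>2 \<le> \<beta> * u / 512"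
    and dp: "diffusion_path b \<beta> a (N / \<beta>) 0 Z"
    and t: "(N + 1) / \<beta> \<le> t"
  shows "s_fun \<beta> a t / 2 \<le> Z t \<and> Z t \<le> 3 / 2 * s_fun \<beta> a t"
proof (rule det_main[OF bpos _ _ dp])
  have key: "\<beta> * u / 8 \<le> a + \<beta> * u / 4 \<and> N \<le> \<beta> * u" if u: "N / \<beta> \<le> u" for u
  proof -
    have Nu: "N \<le> \<beta> * u" using u bpos by (simp add: field_simps)
    have "1 - real_of_int l \<le> \<beta> * u / 8" 
    proof -
      have "0 \<le> \<beta>\<^sup>2" by simp
      moreover have "- real_of_int l \<le> \<bar>real_of_int l\<bar>" by simp
      ultimately show ?thesis using Nu Nbig by linarith
    qed
    then show ?thesis using al Nu by simp
  qed
  show "4 \<le> s_fun \<beta> a u \<and> 3 * \<beta> \<le> s_fun \<beta> a u" if u: "N / \<beta> \<le> u" for u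
  proof -
    have k: "\<beta> * u / 8 \<le> a + \<beta> * u / 4" "N \<le> \<beta> * u" using key[OF u] by auto
    have "16 + 9 * \<beta>\<^sup>2 \<le> a + \<beta> * u / 4" 
    proof -
      have "0 \<le> \<bar>real_of_int l\<bar>" by simp
      then show ?thesis using k Nbig by linarith
    qed
    then have "sqrt (16 + 9 * \<beta>\<^sup>2) \<le> s_fun \<beta> a u" unfolding s_fun_def by simp
    moreover have "4 \<le> sqrt (16 + 9 * \<beta>\<^sup>2)" by (simp add: real_le_rsqrt)
    moreover have "3 * \<beta> \<le> sqrt (16 + 9 * \<beta>\<^sup>2)" using bpos by (intro real_le_rsqrt) (simp add: power_mult_distrib)
    ultimately show ?thesis by simp
  qed
  show "\<bar>b v - b u\<bar> \<le> s_fun \<beta> a u / 8" if "N / \<beta> \<le> u" "u \<le> v" "v \<le> u + 1 / \<beta>" for u v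
  proof -
    have k: "\<beta> * u / 8 \<le> a + \<beta> * u / 4" using key[OF that(1)] by auto
    have nn: "0 \<le> a + \<beta> * u / 4"
    proof -
      have "N \<le> \<beta> * u" using key[OF that(1)] by simp
      moreover have "0 \<le> \<bar>real_of_int l\<bar>" "0 \<le> \<beta>\<^sup>2" by simp_all
      ultimately show "0 \<le> a + \<beta> * u / 4" using k Nbig by linarith
    qed
    have "(b v - b u)\<^sup>2 \<le> (a + \<beta> * u / 4) / 64" using pc[OF that] k by simp
    also have "\<dots> = (s_fun \<beta> a u / 8)\<^sup>2"
    proof -
      from nn have "(s_fun \<beta> a u)\<^sup>2 = a + \<beta> * u / 4" unfolding s_fun_def by simp
      then show ?thesis by (simp add: power_divide)
    qed
    finally have "\<bar>b v - b u\<bar>\<^sup>2 \<le> (s_fun \<beta> a u / 8)\<^sup>2" by simp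
    then show ?thesis using power2_le_imp_le[of "\<bar>b v - b u\<bar>" "s_fun \<beta> a u / 8"] using nn by (simp add: s_fun_def)
  qed
  show "N / \<beta> + 1 / \<beta> \<le> t" using t by (simp add: add_divide_distrib)
qed

lemma chain_dyadic:
  fixes f :: "real \<Rightarrow> real" and y :: "nat \<Rightarrow> real"
  assumes incr: "\<And>n j. j < 2 ^ n \<Longrightarrow> \<bar>f (x0 + L * real (Suc j) / 2 ^ n) - f (x0 + L * real j / 2 ^ n)\<bar> \<le> y n"
  shows "j \<le> 2 ^ n \<Longrightarrow> \<bar>f (x0 + L * real j / 2 ^ n) - f x0\<bar> \<le> (\<Sum>i\<le>n. y i)"
proof (induction n arbitrary: j)
  case 0
  have "\<bar>f (x0 + L * real (Suc 0) / 2 ^ 0) - f (x0 + L * real 0 / 2 ^ 0)\<bar> \<le> y 0" using incr[of 0 0] by simp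
  then have y0: "0 \<le> y 0" by (rule order_trans[OF abs_ge_zero])
  show ?case
  proof (cases "j = 0")
    case True then show ?thesis using y0 by simp
  next
    case False
    then have "j = 1" using 0 by simp
    then show ?thesis using incr[of 0 0] by simp
  qed
next
  case (Suc n)
  have ySn: "0 \<le> y (Suc n)" using incr[of 0 "Suc n"] by (meson abs_ge_zero order_trans zero_less_numeral zero_less_power)
  obtain i where i: "j = 2 * i \<or> j = 2 * i + 1" by (metis odd_two_times_div_two_succ dvd_mult_div_cancel)
  have pt: "x0 + L * real (2 * i) / 2 ^ Suc n = x0 + L * real i / 2 ^ n" by simp
  show ?case
  proof (cases "j = 2 * i")
    case True
    then have "i \<le> 2 ^ n" using Suc.prems by simp
    then have "\<bar>f (x0 + L * real i / 2 ^ n) - f x0\<bar> \<le> (\<Sum>k\<le>n. y k)" by (rule Suc.IH)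
    then show ?thesis using True pt ySn by simp
  next
    case False
    then have j: "j = Suc (2 * i)" using i by simp
    then have "i < 2 ^ n" using Suc.prems by simp
    then have "i \<le> 2 ^ n" by simp
    then have h1: "\<bar>f (x0 + L * real i / 2 ^ n) - f x0\<bar> \<le> (\<Sum>k\<le>n. y k)" by (rule Suc.IH)
    have "2 * i < 2 ^ Suc n" using \<open>i < 2 ^ n\<close> by simp
    then have h2: "\<bar>f (x0 + L * real j / 2 ^ Suc n) - f (x0 + L * real (2 * i) / 2 ^ Suc n)\<bar> \<le> y (Suc n)"
      using incr[of "2 * i" "Suc n"] j by simp
    have "\<bar>f (x0 + L * real j / 2 ^ Suc n) - f x0\<bar> \<le> (\<Sum>k\<le>n. y k) + y (Suc n)"
      using h1 h2[unfolded pt] by arith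
    then show ?thesis by simp
  qed
qed

lemma chain_all:
  fixes f :: "real \<Rightarrow> real" and y :: "nat \<Rightarrow> real"
  assumes L: "L > 0" and cont: "continuous_on {x0..x0 + L} f"
    and incr: "\<And>n j. j < 2 ^ n \<Longrightarrow> \<bar>f (x0 + L * real (Suc j) / 2 ^ n) - f (x0 + L * real j / 2 ^ n)\<bar> \<le> y n"
    and sy: "summable y"
    and x: "x0 \<le> x" "x \<le> x0 + L"
  shows "\<bar>f x - f x0\<bar> \<le> suminf y"
proof -
  have ynn: "0 \<le> y n" for n using incr[of 0 n] by (meson abs_ge_zero order_trans zero_less_numeral zero_less_power)
  define r where "r = (x - x0) / L"
  have r: "0 \<le> r" "r \<le> 1" using x L by (auto simp: r_def field_simps)
  define j where "j n = nat \<lfloor>r * 2 ^ n\<rfloor>" for n :: nat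
  define p where "p n = x0 + L * real (j n) / 2 ^ n" for n :: nat
  have jr: "real (j n) \<le> r * 2 ^ n" "r * 2 ^ n < real (j n) + 1" for n
    using r by (auto simp: j_def of_nat_nat)
  have jle: "j n \<le> 2 ^ n" for n
  proof -
    have "real (j n) \<le> 2 ^ n" using jr(1)[of n] r by (smt (verit) mult_left_le_one_le zero_le_power zero_le_numeral)
    then show ?thesis by (metis of_nat_le_iff of_nat_numeral of_nat_power)
  qed
  have bnd: "\<bar>f (p n) - f x0\<bar> \<le> suminf y" for n
  proof -
    have "\<bar>f (p n) - f x0\<bar> \<le> (\<Sum>i\<le>n. y i)" unfolding p_def by (rule chain_dyadic[OF incr jle])
    also have "\<dots> \<le> suminf y" using sy ynn by (simp add: sum_le_suminf)
    finally show ?thesis .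
  qed
  have pin: "p n \<in> {x0..x0 + L}" for n
  proof -
    have "0 \<le> L * real (j n) / 2 ^ n" using L by simp
    moreover have "L * real (j n) / 2 ^ n \<le> L"
      using jle[of n] L by (simp add: field_simps)
    ultimately show ?thesis by (simp add: p_def)
  qed
  have plim: "p \<longlonglongrightarrow> x"
  proof (rule tendsto_sandwich[of "\<lambda>n. x - L * (1 / 2) ^ n" _ _ "\<lambda>n. x"])
    show "\<forall>\<^sub>F n in sequentially. x - L * (1 / 2) ^ n \<le> p n"
    proof (intro always_eventually allI)
      fix n
      have "r * 2 ^ n - 1 \<le> real (j n)" using jr(2)[of n] by simp
      then have "L * (r * 2 ^ n - 1) / 2 ^ n \<le> L * real (j n) / 2 ^ n"
        using L by (intro divide_right_mono mult_left_mono) auto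
      moreover have "L * (r * 2 ^ n - 1) / 2 ^ n = (x - x0) - L * (1 / 2) ^ n"
        using L by (simp add: r_def field_simps power_one_over)
      ultimately show "x - L * (1 / 2) ^ n \<le> p n" by (simp add: p_def)
    qed
    show "\<forall>\<^sub>F n in sequentially. p n \<le> x"
    proof (intro always_eventually allI)
      fix n
      have "L * real (j n) / 2 ^ n \<le> L * (r * 2 ^ n) / 2 ^ n"
        using L jr(1)[of n] by (intro divide_right_mono mult_left_mono) auto
      also have "\<dots> = x - x0" using L by (simp add: r_def)
      finally show "p n \<le> x" by (simp add: p_def)
    qed
    have "(\<lambda>n. L * (1 / 2) ^ n) \<longlonglongrightarrow> L * 0" by (intro tendsto_intros) simp
    then show "(\<lambda>n. x - L * (1 / 2) ^ n) \<longlonglongrightarrow> x" using tendsto_diff[of "\<lambda>_. x" x sequentially] by force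
  qed simp
  have "(\<lambda>n. f (p n)) \<longlonglongrightarrow> f x"
    using continuous_on_tendsto_compose[OF cont plim] x pin by auto
  then have "(\<lambda>n. \<bar>f (p n) - f x0\<bar>) \<longlonglongrightarrow> \<bar>f x - f x0\<bar>" by (intro tendsto_intros)
  then show ?thesis using bnd by (intro tendsto_upperbound[of _ _ sequentially]) (auto intro: always_eventually)
qed

lemma incr_tail:
  assumes bm: "brownian_motion M B" and s: "0 \<le> s" "s < t" and y: "0 < y"
  shows "measure M {\<omega>\<in>space M. y < \<bar>B t \<omega> - B s \<omega>\<bar>} \<le> 3 * (t - s)\<^sup>2 / y ^ 4"
proof -
  interpret prob_space M using bm by (simp add: brownian_motion_def)
  define X where "X = (\<lambda>\<omega>. B t \<omega> - B s \<omega>)"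
  define \<sigma> where "\<sigma> = sqrt (t - s)"
  have \<sigma>: "0 < \<sigma>" using s by (simp add: \<sigma>_def)
  have \<sigma>2: "\<sigma>\<^sup>2 = t - s" using s by (simp add: \<sigma>_def)
  have D: "distributed M lborel X (\<lambda>x. ennreal (normal_density 0 \<sigma> x))"
    using bm s unfolding brownian_motion_def X_def \<sigma>_def by blast
  have Xm: "X \<in> borel_measurable M" using distributed_measurable[OF D] by simp
  have hb: "has_bochner_integral lborel (\<lambda>x. normal_density 0 \<sigma> x * (x - 0) ^ (2 * 2)) (fact (2 * 2) / ((2 / \<sigma>\<^sup>2) ^ 2 * fact 2))"
    by (rule normal_moment_even) (rule \<sigma>)
  have val: "fact (2 * 2) / ((2 / \<sigma>\<^sup>2) ^ 2 * fact 2) = (3 * (t - s)\<^sup>2 :: real)"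
    using \<sigma> unfolding \<sigma>2[symmetric] by (simp add: fact_numeral field_simps power2_eq_square)
  have int_eq: "(LINT x|lborel. normal_density 0 \<sigma> x * x ^ 4) = (LINT \<omega>|M. (X \<omega>) ^ 4)"
    by (rule distributed_integral[OF D]) auto
  have lb: "(LINT x|lborel. normal_density 0 \<sigma> x * x ^ 4) = 3 * (t - s)\<^sup>2"
    using has_bochner_integral_integral_eq[OF hb] val by simp
  have intl: "integrable lborel (\<lambda>x. normal_density 0 \<sigma> x * x ^ 4)"
    using has_bochner_integral_iff[THEN iffD1, OF hb] by simp
  have intM: "integrable M (\<lambda>\<omega>. (X \<omega>) ^ 4)"
    using distributed_integrable[OF D, of "\<lambda>x. x ^ 4"] intl by auto
  have mk: "measure M {\<omega>\<in>space M. y ^ 4 \<le> (X \<omega>) ^ 4} \<le> (LINT \<omega>|M. (X \<omega>) ^ 4) / y ^ 4"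
    by (rule integral_Markov_inequality_measure[OF intM, of "space M"]) (use y in auto)
  have sub: "{\<omega>\<in>space M. y < \<bar>X \<omega>\<bar>} \<subseteq> {\<omega>\<in>space M. y ^ 4 \<le> (X \<omega>) ^ 4}"
  proof safe
    fix \<omega> assume "\<omega> \<in> space M" "y < \<bar>X \<omega>\<bar>"
    then have "y ^ 4 \<le> \<bar>X \<omega>\<bar> ^ 4" using y by (intro power_mono) auto
    then show "y ^ 4 \<le> (X \<omega>) ^ 4" by (simp add: power_even_abs_numeral)
  qed
  have "{\<omega>\<in>space M. y ^ 4 \<le> (X \<omega>) ^ 4} \<in> sets M" using Xm by measurable
  then have "measure M {\<omega>\<in>space M. y < \<bar>X \<omega>\<bar>} \<le> measure M {\<omega>\<in>space M. y ^ 4 \<le> (X \<omega>) ^ 4}"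
    by (rule finite_measure_mono[OF sub])
  also have "\<dots> \<le> 3 * (t - s)\<^sup>2 / y ^ 4" using mk int_eq lb by simp
  finally show ?thesis by (simp add: X_def)
qed

definition rho :: "nat \<Rightarrow> real" where "rho m = sqrt (real m / 204800)"
definition dpt :: "real \<Rightarrow> nat \<Rightarrow> nat \<Rightarrow> nat \<Rightarrow> real" where
  "dpt \<beta> m n j = real m / \<beta> + 2 / \<beta> * real j / 2 ^ n"
definition badset :: "'a measure \<Rightarrow> (real \<Rightarrow> 'a \<Rightarrow> real) \<Rightarrow> real \<Rightarrow> nat \<Rightarrow> nat \<Rightarrow> nat \<Rightarrow> 'a set" where
  "badset M B \<beta> m n j = {\<omega>\<in>space M. rho m * (9 / 10) ^ n < \<bar>B (dpt \<beta> m n (Suc j)) \<omega> - B (dpt \<beta> m n j) \<omega>\<bar>}"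
definition Bad :: "'a measure \<Rightarrow> (real \<Rightarrow> 'a \<Rightarrow> real) \<Rightarrow> real \<Rightarrow> nat \<Rightarrow> 'a set" where
  "Bad M B \<beta> k0 = (\<Union>m. \<Union>n. \<Union>j\<in>{..<2 ^ n}. badset M B \<beta> (m + k0) n j)"

lemma good_path:
  assumes bm: "brownian_motion M B" and bpos: "\<beta> > 0" and k0: "1 \<le> k0"
    and \<omega>: "\<omega> \<in> space M" "\<omega> \<notin> Bad M B \<beta> k0"
    and u: "real k0 / \<beta> \<le> u" "u \<le> v" "v \<le> u + 1 / \<beta>"
  shows "(B v \<omega> - B u \<omega>)\<^sup>2 \<le> \<beta> * u / 512"
proof -
  have cont: "continuous_on {0..} (\<lambda>t. B t \<omega>)" using bm \<omega>(1) by (simp add: brownian_motion_def)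
  have incr_all: "\<bar>B (dpt \<beta> m n (Suc j)) \<omega> - B (dpt \<beta> m n j) \<omega>\<bar> \<le> rho m * (9 / 10) ^ n"
    if "k0 \<le> m" "j < 2 ^ n" for m n j
  proof (rule ccontr)
    assume "\<not> ?thesis"
    then have "\<omega> \<in> badset M B \<beta> ((m - k0) + k0) n j" using \<omega>(1) that by (simp add: badset_def)
    then have "\<omega> \<in> Bad M B \<beta> k0" unfolding Bad_def using that by blast
    with \<omega>(2) show False by simp
  qed
  define m where "m = nat \<lfloor>\<beta> * u\<rfloor>"
  have bu: "real k0 \<le> \<beta> * u" using u(1) bpos by (simp add: field_simps)
  have bu0: "0 \<le> \<beta> * u" using bu by simp
  have mle: "real m \<le> \<beta> * u" "\<beta> * u < real m + 1" using bu0 by (auto simp: m_def of_nat_nat)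
  have km: "k0 \<le> m"
  proof -
    have "int k0 \<le> \<lfloor>\<beta> * u\<rfloor>" using bu by (simp add: le_floor_iff)
    then show ?thesis by (simp add: m_def)
  qed
  define x0 where "x0 = real m / \<beta>"
  define L where "L = 2 / \<beta>"
  have L: "L > 0" using bpos by (simp add: L_def)
  have x0: "0 \<le> x0" using bpos by (simp add: x0_def)
  have ux: "x0 \<le> u" using mle bpos by (simp add: x0_def field_simps)
  have uL: "u < x0 + 1 / \<beta>" using mle bpos by (simp add: x0_def field_simps)
  have vL: "v \<le> x0 + L" using uL u(3) by (simp add: L_def)
  have cw: "continuous_on {x0..x0 + L} (\<lambda>t. B t \<omega>)" by (rule continuous_on_subset[OF cont]) (use x0 in auto)
  have incr: "\<bar>B (x0 + L * real (Suc j) / 2 ^ n) \<omega> - B (x0 + L * real j / 2 ^ n) \<omega>\<bar> \<le> rho m * (9 / 10) ^ n"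
    if "j < 2 ^ n" for n j
    using incr_all[OF km that] by (simp add: dpt_def x0_def L_def)
  have sg: "summable (\<lambda>n. rho m * (9 / 10 :: real) ^ n)" by (intro summable_mult summable_geometric) simp
  have sv: "(\<Sum>n. rho m * (9 / 10 :: real) ^ n) = 10 * rho m"
    by (subst suminf_mult) (simp_all add: suminf_geometric)
  have hu: "\<bar>B u \<omega> - B x0 \<omega>\<bar> \<le> 10 * rho m"
    using chain_all[OF L cw incr sg] ux uL vL u sv by simp
  have hv: "\<bar>B v \<omega> - B x0 \<omega>\<bar> \<le> 10 * rho m"
    using chain_all[OF L cw incr sg] ux u vL sv by simp
  have "\<bar>B v \<omega> - B u \<omega>\<bar> \<le> 20 * rho m" using hu hv by arith
  then have "(B v \<omega> - B u \<omega>)\<^sup>2 \<le> (20 * rho m)\<^sup>2"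
    by (metis abs_ge_zero abs_le_square_iff abs_of_nonneg order_trans)
  also have "\<dots> = 400 * (real m / 204800)" by (simp add: rho_def power_mult_distrib)
  also have "\<dots> \<le> \<beta> * u / 512" using mle by simp
  finally show ?thesis .
qed

lemma badset_sets:
  assumes bm: "brownian_motion M B" and bpos: "\<beta> > 0"
  shows "badset M B \<beta> m n j \<in> sets M"
proof -
  have m1: "B (dpt \<beta> m n (Suc j)) \<in> borel_measurable M" and m2: "B (dpt \<beta> m n j) \<in> borel_measurable M"
    using bm bpos unfolding brownian_motion_def by (auto simp: dpt_def)
  show ?thesis unfolding badset_def using m1 m2 by measurable
qed

lemma pw_swap: "((x::real) ^ n) ^ k = (x ^ k) ^ n"
  by (simp add: power_mult[symmetric] mult.commute)

lemma pw_num: "((10::real) ^ n) ^ 4 * 6561 ^ n = (2 ^ n)\<^sup>2 * ((9 ^ n) ^ 4 * 2500 ^ n)"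
proof -
  have a: "((10::real) ^ n) ^ 4 = 10000 ^ n" using pw_swap[of 10 n 4] by simp
  have b: "((9::real) ^ n) ^ 4 = 6561 ^ n" using pw_swap[of 9 n 4] by simp
  have c: "((2::real) ^ n)\<^sup>2 = 4 ^ n" using pw_swap[of 2 n 2] by simp
  have d: "(10000::real) ^ n * 6561 ^ n = (4 ^ n) * (6561 ^ n * 2500 ^ n)"
    by (simp add: power_mult_distrib[symmetric])
  show ?thesis unfolding a b c using d .
qed

lemma badset_prob:
  assumes bm: "brownian_motion M B" and bpos: "\<beta> > 0" and m: "1 \<le> m"
  shows "measure M (badset M B \<beta> m n j) \<le> 12 / (\<beta>\<^sup>2 * (rho m) ^ 4) * (1 / (4 * (9 / 10) ^ 4)) ^ n"
proof -
  have rp: "0 < rho m" using m by (simp add: rho_def)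
  define s where "s = dpt \<beta> m n j"
  define t where "t = dpt \<beta> m n (Suc j)"
  have s0: "0 \<le> s" using bpos by (simp add: s_def dpt_def)
  have ts: "t - s = 2 / (\<beta> * 2 ^ n)" using bpos by (simp add: s_def t_def dpt_def field_simps add_divide_distrib[symmetric])
  have "0 < 2 / (\<beta> * 2 ^ n)" using bpos by simp
  then have st: "s < t" using ts by linarith
  have "measure M (badset M B \<beta> m n j) \<le> 3 * (t - s)\<^sup>2 / (rho m * (9 / 10) ^ n) ^ 4"
    unfolding badset_def s_def[symmetric] t_def[symmetric]
    by (rule incr_tail[OF bm s0 st]) (use rp in simp)
  also have "\<dots> = 12 / (\<beta>\<^sup>2 * (rho m) ^ 4) * (1 / (4 * (9 / 10) ^ 4)) ^ n"
    unfolding ts using bpos rp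
    by (simp add: power_mult_distrib power_divide field_simps flip: power_mult)
       (simp add: power_mult pw_num)
  finally show ?thesis .
qed

lemma window_prob:
  assumes bm: "brownian_motion M B" and bpos: "\<beta> > 0" and m: "1 \<le> m"
  shows "measure M (\<Union>n. \<Union>j\<in>{..<2 ^ n}. badset M B \<beta> m n j)
           \<le> 12 * 6561 / 1561 * 204800\<^sup>2 / (\<beta>\<^sup>2 * (real m)\<^sup>2)"
proof -
  interpret prob_space M using bm by (simp add: brownian_motion_def)
  define K where "K = 12 / (\<beta>\<^sup>2 * (rho m) ^ 4)"
  define r :: real where "r = 5000 / 6561"
  have Kp: "0 \<le> K" by (simp add: K_def)
  have U: "measure M (\<Union>j\<in>{..<2 ^ n}. badset M B \<beta> m n j) \<le> K * r ^ n" for n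
  proof -
    have "measure M (\<Union>j\<in>{..<2 ^ n}. badset M B \<beta> m n j) \<le> (\<Sum>j\<in>{..<(2::nat) ^ n}. measure M (badset M B \<beta> m n j))"
      by (rule finite_measure_subadditive_finite) (auto intro: badset_sets[OF bm bpos])
    also have "\<dots> \<le> (\<Sum>j\<in>{..<(2::nat) ^ n}. K * (1 / (4 * (9 / 10) ^ 4)) ^ n)"
      by (intro sum_mono) (use badset_prob[OF bm bpos m] in \<open>simp add: K_def\<close>)
    also have "\<dots> = K * (2 ^ n * (1 / (4 * (9 / 10) ^ 4)) ^ n)" by simp
    also have "2 ^ n * (1 / (4 * (9 / 10) ^ 4)) ^ n = (r ^ n :: real)"
    proof -
      have e: "(2::real) * (1 / (4 * (9 / 10) ^ 4)) = 5000 / 6561" by (simp add: power_divide)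
      show ?thesis unfolding r_def e[symmetric] by (rule power_mult_distrib[symmetric])
    qed
    finally show ?thesis .
  qed
  have sr: "summable (\<lambda>n. K * r ^ n)" by (intro summable_mult summable_geometric) (simp add: r_def)
  have sU: "summable (\<lambda>n. measure M (\<Union>j\<in>{..<2 ^ n}. badset M B \<beta> m n j))"
    by (rule summable_comparison_test'[OF sr, of 0]) (use U in simp)
  have "measure M (\<Union>n. \<Union>j\<in>{..<2 ^ n}. badset M B \<beta> m n j) \<le> (\<Sum>n. measure M (\<Union>j\<in>{..<2 ^ n}. badset M B \<beta> m n j))"
    by (rule finite_measure_subadditive_countably[OF _ sU]) (auto intro: badset_sets[OF bm bpos])
  also have "\<dots> \<le> (\<Sum>n. K * r ^ n)" by (rule suminf_le[OF U sU sr])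
  also have "\<dots> = K * (6561 / 1561)"
    by (subst suminf_mult) (simp_all add: suminf_geometric r_def)
  also have "\<dots> = 12 * 6561 / 1561 * 204800\<^sup>2 / (\<beta>\<^sup>2 * (real m)\<^sup>2)"
  proof -
    have "(rho m) ^ 4 = (real m / 204800)\<^sup>2"
    proof -
      have e1: "(rho m)\<^sup>2 = real m / 204800" by (simp add: rho_def)
      have e2: "(rho m) ^ 4 = ((rho m)\<^sup>2)\<^sup>2" by (simp add: power_mult[symmetric])
      show ?thesis unfolding e2 e1 ..
    qed
    then have e: "(real m)\<^sup>2 = (rho m) ^ 4 * 41943040000" by (simp add: power_divide)
    have rp: "0 < rho m" using m by (simp add: rho_def)
    show ?thesis unfolding e K_def using rp bpos by (simp add: field_simps)
  qed
  finally show ?thesis .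
qed

definition gfun :: "real \<Rightarrow> nat \<Rightarrow> real" where
  "gfun \<beta> m = 12 * 6561 / 1561 * 204800\<^sup>2 / (\<beta>\<^sup>2 * (real m)\<^sup>2)"

lemma gfun_summable: "summable (gfun \<beta>)"
proof -
  have "summable (\<lambda>m. (12 * 6561 / 1561 * 204800\<^sup>2 / \<beta>\<^sup>2) * inverse ((real m) ^ 2))"
    by (intro summable_mult inverse_power_summable) simp
  moreover have "gfun \<beta> = (\<lambda>m. (12 * 6561 / 1561 * 204800\<^sup>2 / \<beta>\<^sup>2) * inverse ((real m) ^ 2))"
    by (rule ext) (simp only: gfun_def divide_inverse inverse_mult_distrib mult.assoc)
  ultimately show ?thesis by simp
qed

lemma gfun_nonneg: "0 \<le> gfun \<beta> m" by (simp add: gfun_def)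

lemma total_prob:
  assumes bm: "brownian_motion M B" and bpos: "\<beta> > 0" and k0: "1 \<le> k0"
  shows "measure M (Bad M B \<beta> k0) \<le> (\<Sum>m. gfun \<beta> (m + k0))"
proof -
  interpret prob_space M using bm by (simp add: brownian_motion_def)
  define W where "W m = (\<Union>n. \<Union>j\<in>{..<2 ^ n}. badset M B \<beta> m n j)" for m
  have Wm: "W m \<in> sets M" for m unfolding W_def by (auto intro: badset_sets[OF bm bpos])
  have Wb: "measure M (W (m + k0)) \<le> gfun \<beta> (m + k0)" for m
    unfolding W_def gfun_def by (rule window_prob[OF bm bpos]) (use k0 in simp)
  have sg: "summable (\<lambda>m. gfun \<beta> (m + k0))" using gfun_summable by (rule summable_ignore_initial_segment)
  have sW: "summable (\<lambda>m. measure M (W (m + k0)))"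
    by (rule summable_comparison_test'[OF sg, of 0]) (use Wb in simp)
  have "Bad M B \<beta> k0 = (\<Union>m. W (m + k0))" by (simp add: Bad_def W_def)
  moreover have "range (\<lambda>m. W (m + k0)) \<subseteq> sets M" using Wm by blast
  ultimately have "measure M (Bad M B \<beta> k0) \<le> (\<Sum>m. measure M (W (m + k0)))"
    using finite_measure_subadditive_countably[OF _ sW] by simp
  also have "\<dots> \<le> (\<Sum>m. gfun \<beta> (m + k0))" by (rule suminf_le[OF Wb sW sg])
  finally show ?thesis .
qed

lemma Bad_sets:
  assumes bm: "brownian_motion M B" and bpos: "\<beta> > 0"
  shows "Bad M B \<beta> k0 \<in> sets M"
  unfolding Bad_def by (auto intro: badset_sets[OF bm bpos])

theorem proposition3p8:
  fixes M :: "'a measure" and B :: "real \<Rightarrow> 'a \<Rightarrow> real" and l :: int and \<beta> :: real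
  assumes "brownian_motion M B" and "\<beta> > 0"
  shows "\<forall>\<epsilon>>0. \<forall>\<^sub>F k0 in sequentially.
           \<exists>E\<in>sets M. measure M E \<ge> 1 - \<epsilon> \<and>
             E \<subseteq> {\<omega>\<in>space M.
               \<forall>a\<in>{real_of_int l - 1 .. real_of_int l}. \<forall>N::int. N \<ge> int k0 \<longrightarrow>
                 (\<forall>Z. diffusion_path (\<lambda>t. B t \<omega>) \<beta> a (real_of_int N / \<beta>) 0 Z \<longrightarrow>
                   (\<forall>t \<ge> (real_of_int N + 1) / \<beta>.
                      s_fun \<beta> a t / 2 \<le> Z t \<and> Z t \<le> 3 / 2 * s_fun \<beta> a t))}"
proof (intro allI impI)
  fix \<epsilon> :: real assume eps: "\<epsilon> > 0"
  note bm = assms(1) and bpos = assms(2)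
  interpret prob_space M using bm by (simp add: brownian_motion_def)
  define thr where "thr = 200 + 8 * \<bar>real_of_int l\<bar> + 72 * \<beta>\<^sup>2"
  have lim: "(\<lambda>k. \<Sum>m. gfun \<beta> (m + k)) \<longlonglongrightarrow> 0" by (rule suminf_exist_split2[OF gfun_summable])
  have ev1: "\<forall>\<^sub>F k in sequentially. (\<Sum>m. gfun \<beta> (m + k)) < \<epsilon>" using order_tendstoD(2)[OF lim eps] .
  have ev2: "\<forall>\<^sub>F k in sequentially. 1 \<le> k \<and> thr \<le> real k"
  proof -
    have "\<forall>\<^sub>F k in sequentially. nat \<lceil>thr\<rceil> + 1 \<le> k" by (rule eventually_ge_at_top)
    then show ?thesis
    proof (rule eventually_mono)
      fix k :: nat assume k: "nat \<lceil>thr\<rceil> + 1 \<le> k"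
      have "thr \<le> real (nat \<lceil>thr\<rceil>)" by linarith
      then show "1 \<le> k \<and> thr \<le> real k" using k by linarith
    qed
  qed
  show "\<forall>\<^sub>F k0 in sequentially.
           \<exists>E\<in>sets M. measure M E \<ge> 1 - \<epsilon> \<and>
             E \<subseteq> {\<omega>\<in>space M.
               \<forall>a\<in>{real_of_int l - 1 .. real_of_int l}. \<forall>N::int. N \<ge> int k0 \<longrightarrow>
                 (\<forall>Z. diffusion_path (\<lambda>t. B t \<omega>) \<beta> a (real_of_int N / \<beta>) 0 Z \<longrightarrow>
                   (\<forall>t \<ge> (real_of_int N + 1) / \<beta>.
                      s_fun \<beta> a t / 2 \<le> Z t \<and> Z t \<le> 3 / 2 * s_fun \<beta> a t))}"
    using ev1 ev2
  proof eventually_elim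
    case (elim k0)
    then have k0: "1 \<le> k0" "thr \<le> real k0" and sm: "(\<Sum>m. gfun \<beta> (m + k0)) < \<epsilon>" by auto
    define E where "E = space M - Bad M B \<beta> k0"
    have Bs: "Bad M B \<beta> k0 \<in> sets M" by (rule Bad_sets[OF bm bpos])
    have Es: "E \<in> sets M" unfolding E_def using Bs by auto
    have "measure M E = 1 - measure M (Bad M B \<beta> k0)" unfolding E_def by (rule prob_compl[OF Bs])
    moreover have "measure M (Bad M B \<beta> k0) \<le> \<epsilon>" using total_prob[OF bm bpos k0(1)] sm by simp
    ultimately have mE: "measure M E \<ge> 1 - \<epsilon>" by simp
    have sub: "E \<subseteq> {\<omega>\<in>space M.
               \<forall>a\<in>{real_of_int l - 1 .. real_of_int l}. \<forall>N::int. N \<ge> int k0 \<longrightarrow>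
                 (\<forall>Z. diffusion_path (\<lambda>t. B t \<omega>) \<beta> a (real_of_int N / \<beta>) 0 Z \<longrightarrow>
                   (\<forall>t \<ge> (real_of_int N + 1) / \<beta>.
                      s_fun \<beta> a t / 2 \<le> Z t \<and> Z t \<le> 3 / 2 * s_fun \<beta> a t))}"
    proof (intro subsetI CollectI conjI ballI allI impI)
      fix \<omega> assume \<omega>E: "\<omega> \<in> E"
      then show \<omega>s: "\<omega> \<in> space M" by (simp add: E_def)
      have \<omega>n: "\<omega> \<notin> Bad M B \<beta> k0" using \<omega>E by (simp add: E_def)
      fix a N Z t
      assume a: "a \<in> {real_of_int l - 1 .. real_of_int l}" and N: "int k0 \<le> N"
        and dp: "diffusion_path (\<lambda>t. B t \<omega>) \<beta> a (real_of_int N / \<beta>) 0 Z"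
        and t: "(real_of_int N + 1) / \<beta> \<le> t"
      have Nk: "real k0 \<le> real_of_int N" using N by linarith
      have res: "s_fun \<beta> a t / 2 \<le> Z t \<and> Z t \<le> 3 / 2 * s_fun \<beta> a t"
      proof (rule det_final[OF bpos _ _ _ dp t])
        show "real_of_int l - 1 \<le> a" using a by simp
        show "200 + 8 * \<bar>real_of_int l\<bar> + 72 * \<beta>\<^sup>2 \<le> real_of_int N" using k0 Nk by (simp add: thr_def)
        fix u v assume uv: "real_of_int N / \<beta> \<le> u" "u \<le> v" "v \<le> u + 1 / \<beta>"
        have "real k0 / \<beta> \<le> real_of_int N / \<beta>" using Nk bpos by (simp add: divide_right_mono)
        then have "real k0 / \<beta> \<le> u" using uv by linarith
        then show "(B v \<omega> - B u \<omega>)\<^sup>2 \<le> \<beta> * u / 512"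
          by (rule good_path[OF bm bpos k0(1) \<omega>s \<omega>n _ uv(2,3)])
      qed
      show "s_fun \<beta> a t / 2 \<le> Z t" using res by simp
      show "Z t \<le> 3 / 2 * s_fun \<beta> a t" using res by simp
    qed
    show ?case
      apply (rule bexI[of _ E])
       apply (rule conjI[OF mE sub])
      apply (rule Es)
      done
  qed
qed


end
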